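(* For all integers $t,s\ge0$ and $r\ge1$, $$A_{t,s}(r)=\sum_{i=0}^{\min(t,s,r)}\binom{r+t-i}{r}\binom{r+s-i}{r}\binom{r}{i}(-1)^{i},$$ and the generating function satisfies $\sum_{t,s\ge0}A_{t,s}(r)x^ty^s=\dfrac{(1-xy)^r}{(1-x)^{r+1}(1-y)^{r+1}}$.
   Context: The numbers $A_{t,s}(r)$ (integers $t,s$, $r\ge1$) are defined by: $A_{t,s}(r)=0$ if $t<0$ or $s<0$; $A_{t,s}(1)=t+s+1$ for $t,s\ge0$; for $r\ge2$, $t,s\ge0$: $A_{t,s}(r)=\sum_{i=1}^{t}A_{t-i,s}(r-1)+\sum_{i=1}^{s}A_{t,s-i}(r-1)+A_{t,s}(r-1)$. *)

theory Defs
  imports "HOL-Analysis.Analysis"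
begin

text \<open>The numbers A_{t,s}(r), for t,s >= 0 and r >= 1. Negative indices give 0 and
only ever appear as dropped terms, so t,s are taken as naturals. The value at r = 0
is not part of the paper's definition; we set it to 0 (it is never used).\<close>

fun A :: "nat \<Rightarrow> nat \<Rightarrow> nat \<Rightarrow> int" where
  "A t s 0 = 0"
| "A t s (Suc 0) = int t + int s + 1"
| "A t s (Suc (Suc r)) =
     (\<Sum>i=1..t. A (t - i) s (Suc r)) + (\<Sum>i=1..s. A t (s - i) (Suc r)) + A t s (Suc r)"

end

theory Submission
  imports Defs "HOL-Computational_Algebra.Formal_Power_Series"
begin

lemma choose_sym_plus: "(a + b) choose a = (a + b) choose (b::nat)"
  using binomial_symmetric[of a "a+b"] by simp

definition EE :: "'a::comm_ring_1 fps" where "EE = Abs_fps (\<lambda>_. 1)"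

lemma EE_pow: "fps_nth ((EE::'a::comm_ring_1 fps) ^ Suc m) n = of_nat ((n + m) choose m)"
proof (induction m arbitrary: n)
  case 0 then show ?case by (simp add: EE_def)
next
  case (Suc m)
  have "(EE::'a fps) ^ Suc (Suc m) = EE ^ Suc m * EE" by (rule power_Suc2)
  then have "fps_nth ((EE::'a fps) ^ Suc (Suc m)) n = (\<Sum>i=0..n. of_nat ((i + m) choose m))"
    by (simp only: fps_mult_nth Suc) (simp add: EE_def)
  also have "\<dots> = of_nat (\<Sum>i\<le>n. (m + i) choose i)"
    by (simp add: atLeast0AtMost choose_sym_plus[of _ m] add.commute[of m])
  also have "\<dots> = of_nat ((n + Suc m) choose Suc m)"
  proof -
    have "Suc (m + n) = n + Suc m" by simp
    then show ?thesis by (simp only: sum_choose_lower choose_sym_plus[of n "Suc m"])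
  qed
  finally show ?case .
qed

lemma a1: "fps_const (fps_const ((-1::int) ^ k)) = (-1::int fps fps) ^ k"
  by (induction k) (simp_all add: fps_const_mult[symmetric] fps_const_neg[symmetric] del: fps_const_mult fps_const_neg)
lemma a2: "(of_nat c :: int fps fps) = fps_const (fps_const (int c))"
  by (simp add: fps_of_nat[symmetric])
lemma a3: "(of_nat c :: int fps fps) * (- Z) ^ k * 1 ^ (r - k) = fps_const (fps_const ((-1) ^ k * int c)) * Z ^ k"
proof -
  have e: "fps_const (fps_const ((-1) ^ k * int c)) = (-1)^k * fps_const (fps_const (int c))"
    by (simp only: fps_const_mult[symmetric] a1)
  show ?thesis by (simp only: a2 e power_minus[of Z k] power_one mult_1_right mult.assoc mult.left_commute)
qed

definition Ob :: "int fps fps" where "Ob = EE * fps_const EE"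
definition Zb :: "int fps fps" where "Zb = fps_X * fps_const fps_X"
definition Hb :: "int fps fps" where "Hb = 1 - Zb"
definition Gb :: "int fps fps" where "Gb = Abs_fps (\<lambda>t. if t = 0 then EE else 1)"
definition Fb :: "nat \<Rightarrow> int fps fps" where "Fb r = Abs_fps (\<lambda>t. Abs_fps (\<lambda>s. A t s r))"

lemma Ob_pow: "fps_nth (fps_nth (Ob ^ Suc m) t) s = int ((t + m) choose m) * int ((s + m) choose m)"
proof -
  have "Ob ^ Suc m = EE ^ Suc m * fps_const (EE ^ Suc m)"
    by (simp add: Ob_def power_mult_distrib del: power_Suc)
  then show ?thesis
    by (simp add: EE_pow fps_of_nat[symmetric] del: power_Suc)
qed

lemma Zb_pow: "fps_nth (fps_nth (Zb ^ k) t) s = (if t = k \<and> s = k then 1 else 0)"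
proof -
  have "Zb ^ k = fps_X ^ k * fps_const (fps_X ^ k)"
    by (simp add: Zb_def power_mult_distrib)
  then show ?thesis
    by (simp add: fps_X_power_mult_nth)
qed

lemma Hb_pow: "fps_nth (fps_nth (Hb ^ r) t) s = (if t = s then (-1) ^ t * int (r choose t) else 0)"
proof -
  have "Hb ^ r = (\<Sum>k\<le>r. fps_const (fps_const ((-1) ^ k * int (r choose k))) * Zb ^ k)"
  proof -
    have "Hb ^ r = (- Zb + 1) ^ r" by (simp add: Hb_def)
    also have "\<dots> = (\<Sum>k\<le>r. of_nat (r choose k) * (- Zb) ^ k * 1 ^ (r - k))"
      by (rule binomial_ring)
    also have "\<dots> = (\<Sum>k\<le>r. fps_const (fps_const ((-1) ^ k * int (r choose k))) * Zb ^ k)"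
      by (intro sum.cong refl a3)
    finally show ?thesis .
  qed
  then have "fps_nth (fps_nth (Hb ^ r) t) s = (\<Sum>k\<le>r. (-1) ^ k * int (r choose k) * (if t = k \<and> s = k then 1 else 0))"
    by (simp add: fps_sum_nth Zb_pow)
  also have "\<dots> = (\<Sum>k\<le>r. if t = k then (if t = s then (-1) ^ t * int (r choose t) else 0) else 0)"
    by (intro sum.cong) auto
  also have "\<dots> = (if t = s then (-1) ^ t * int (r choose t) else 0)"
    by (simp add: sum.delta)
  finally show ?thesis .
qed

lemma rev_sum: "(\<Sum>i=1..t. f (t - i)) = (\<Sum>k<t. (f::nat\<Rightarrow>int) k)"
proof (induction t)
  case 0 then show ?case by simp
next
  case (Suc t)
  have "(\<Sum>i=1..Suc t. f (Suc t - i)) = f t + (\<Sum>i=Suc 1..Suc t. f (Suc t - i))"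
    by (simp add: sum.atLeast_Suc_atMost)
  also have "(\<Sum>i=Suc 1..Suc t. f (Suc t - i)) = (\<Sum>i=1..t. f (t - i))"
    by (simp only: sum.shift_bounds_cl_Suc_ivl) simp
  finally show ?case using Suc by simp
qed

lemma Zb_mult: "fps_nth (fps_nth (Zb * P) t) s = (if t > 0 \<and> s > 0 then fps_nth (fps_nth P (t-1)) (s-1) else 0)"
  by (simp add: Zb_def mult.assoc fps_X_mult_nth)

lemma Hb_mult: "fps_nth (fps_nth (Hb * P) t) s = fps_nth (fps_nth P t) s - (if t > 0 \<and> s > 0 then fps_nth (fps_nth P (t-1)) (s-1) else 0)"
proof -
  have "Hb * P = P - Zb * P" by (simp add: Hb_def left_diff_distrib)
  then show ?thesis by (simp add: Zb_mult)
qed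

lemma Ob_nth: "fps_nth Ob t = EE"
  by (simp add: Ob_def EE_def)

lemma Gb_eq: "Gb = Hb * Ob"
proof (rule fps_ext)
  fix t
  show "fps_nth Gb t = fps_nth (Hb * Ob) t"
  proof (rule fps_ext)
    fix s
    show "fps_nth (fps_nth Gb t) s = fps_nth (fps_nth (Hb * Ob) t) s"
      by (simp add: Hb_mult Ob_nth Gb_def EE_def)
  qed
qed

lemma Fb1: "Fb (Suc 0) = Hb * Ob ^ 2"
proof (rule fps_ext)
  fix t
  show "fps_nth (Fb (Suc 0)) t = fps_nth (Hb * Ob ^ 2) t"
  proof (rule fps_ext)
    fix s
    have "Ob ^ 2 = Ob ^ Suc 1" by (simp only: numeral_2_eq_2 One_nat_def)
    then show "fps_nth (fps_nth (Fb (Suc 0)) t) s = fps_nth (fps_nth (Hb * Ob ^ 2) t) s"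
      by (simp only: Hb_mult Ob_pow) (cases t; cases s; simp add: Fb_def algebra_simps)
  qed
qed

lemma Gb_mult_nth: "fps_nth (fps_nth (P * Gb) t) s = (\<Sum>j=0..s. fps_nth (fps_nth P t) j) + (\<Sum>k<t. fps_nth (fps_nth P k) s)"
proof -
  have "fps_nth (P * Gb) t = (\<Sum>i\<in>insert t {0..<t}. fps_nth P i * fps_nth Gb (t - i))"
    by (simp add: fps_mult_nth atLeast0AtMost[symmetric] atLeastLessThanSuc_atLeastAtMost[symmetric] atLeast0LessThan)
  also have "\<dots> = fps_nth P t * EE + (\<Sum>i<t. fps_nth P i)"
    by (simp add: Gb_def atLeast0LessThan)
  finally show ?thesis
    by (simp add: fps_mult_nth EE_def fps_sum_nth)
qed

lemma Fb_rec: "Fb (Suc (Suc r)) = Fb (Suc r) * Gb"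
proof (rule fps_ext)
  fix t
  show "fps_nth (Fb (Suc (Suc r))) t = fps_nth (Fb (Suc r) * Gb) t"
  proof (rule fps_ext)
    fix s
    have "(\<Sum>j=0..s. A t j (Suc r)) = (\<Sum>i=1..s. A t (s - i) (Suc r)) + A t s (Suc r)"
      using rev_sum[where t=s and f="\<lambda>j. A t j (Suc r)"]
      by (simp add: atLeast0AtMost lessThan_Suc_atMost[symmetric])
    then show "fps_nth (fps_nth (Fb (Suc (Suc r))) t) s = fps_nth (fps_nth (Fb (Suc r) * Gb) t) s"
      using rev_sum[where t=t and f="\<lambda>k. A k s (Suc r)"]
      by (simp add: Gb_mult_nth Fb_def)
  qed
qed

lemma Fb_closed: "Fb (Suc r) = Hb ^ Suc r * Ob ^ Suc (Suc r)"
proof (induction r)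
  case 0 then show ?case by (simp add: Fb1 power2_eq_square)
next
  case (Suc r)
  show ?case by (simp only: Fb_rec Suc Gb_eq) (simp add: algebra_simps)
qed

lemma nth2_mult: "fps_nth (fps_nth (P * Q) t) s = (\<Sum>k=0..t. \<Sum>j=0..s. fps_nth (fps_nth P k) j * fps_nth (fps_nth Q (t - k)) (s - j))"
  by (simp add: fps_mult_nth fps_sum_nth)

lemma closed_form:
  assumes "r \<ge> 1"
  shows "A t s r = (\<Sum>i=0..min t (min s r).
               int ((r + t - i) choose r) * int ((r + s - i) choose r) * int (r choose i) * (-1) ^ i)"
proof -
  obtain q where q: "r = Suc q" using assms by (cases r) auto
  define g where "g k = int ((r + t - k) choose r) * int ((r + s - k) choose r) * int (r choose k) * (-1) ^ k" for k
  have "A t s r = fps_nth (fps_nth (Fb r) t) s" by (simp add: Fb_def)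
  also have "\<dots> = fps_nth (fps_nth (Hb ^ r * Ob ^ Suc r) t) s" using Fb_closed[of q] q by simp
  also have "\<dots> = (\<Sum>k=0..t. \<Sum>j=0..s. (if k = j then (-1) ^ k * int (r choose k) else 0) *
         (int ((t - k + r) choose r) * int ((s - j + r) choose r)))"
    by (simp only: nth2_mult Hb_pow Ob_pow)
  also have "\<dots> = (\<Sum>k=0..t. if k \<le> s then g k else 0)"
  proof (rule sum.cong[OF refl])
    fix k assume k: "k \<in> {0..t}"
    have "(\<Sum>j=0..s. (if k = j then (-1) ^ k * int (r choose k) else 0) *
         (int ((t - k + r) choose r) * int ((s - j + r) choose r)))
       = (\<Sum>j=0..s. if k = j then (-1) ^ k * int (r choose k) * (int ((t - k + r) choose r) * int ((s - k + r) choose r)) else 0)"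
      by (intro sum.cong) auto
    also have "\<dots> = (if k \<le> s then g k else 0)"
      using k by (simp add: sum.delta g_def algebra_simps)
    finally show "(\<Sum>j=0..s. (if k = j then (-1) ^ k * int (r choose k) else 0) *
         (int ((t - k + r) choose r) * int ((s - j + r) choose r))) = (if k \<le> s then g k else 0)" .
  qed
  also have "\<dots> = (\<Sum>k\<in>{0..t} \<inter> {k. k \<le> s}. g k)"
    by (simp add: sum.inter_restrict)
  also have "{0..t} \<inter> {k. k \<le> s} = {0..min t s}" by auto
  also have "(\<Sum>k\<in>{0..min t s}. g k) = (\<Sum>k\<in>{0..min t (min s r)}. g k)"
    by (rule sum.mono_neutral_right) (auto simp: g_def)
  finally show ?thesis by (simp add: g_def)
qed

lemma has_sum_finsum:
  fixes f :: "'i \<Rightarrow> 'a \<Rightarrow> real"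
  assumes "finite I" "\<And>i. i \<in> I \<Longrightarrow> (f i has_sum c i) B"
  shows "((\<lambda>x. \<Sum>i\<in>I. f i x) has_sum (\<Sum>i\<in>I. c i)) B"
  using assms
proof (induction I rule: finite_induct)
  case empty then show ?case by simp
next
  case (insert j I)
  then show ?case by (simp add: has_sum_add)
qed

lemma has_sum_prod_real:
  fixes f g :: "nat \<Rightarrow> real"
  assumes f: "(f has_sum a) UNIV" "(\<lambda>z. norm (f z)) summable_on UNIV"
      and g: "(g has_sum b) UNIV" "(\<lambda>z. norm (g z)) summable_on UNIV"
  shows "((\<lambda>(p, q). f p * g q) has_sum (a * b)) UNIV"
proof -
  have U: "(UNIV :: (nat \<times> nat) set) = Sigma UNIV (\<lambda>_. UNIV)" by simp
  have "(\<lambda>z. norm ((\<lambda>(p, q). f p * g q) z)) summable_on Sigma UNIV (\<lambda>_. UNIV)"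
  proof (rule Infinite_Sum.abs_summable_on_Sigma_iff[THEN iffD2], intro conjI ballI)
    fix p :: nat
    show "(\<lambda>q. norm (case (p, q) of (p, q) \<Rightarrow> f p * g q)) summable_on UNIV"
      using summable_on_cmult_right[OF g(2), of "norm (f p)"] by (simp add: norm_mult abs_mult)
  next
    have "infsum (\<lambda>q. norm (case (p, q) of (p, q) \<Rightarrow> f p * g q)) UNIV = norm (f p) * infsum (\<lambda>q. norm (g q)) UNIV" for p
      by (simp only: real_norm_def case_prod_conv abs_mult infsum_cmult_right')
    moreover have "(\<lambda>p. norm (norm (f p) * infsum (\<lambda>q. norm (g q)) UNIV)) summable_on UNIV"
      using summable_on_cmult_left[OF f(2), of "infsum (\<lambda>q. norm (g q)) UNIV"]
      by (simp add: norm_mult infsum_nonneg)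
    ultimately show "(\<lambda>p. norm (infsum (\<lambda>q. norm (case (p, q) of (p, q) \<Rightarrow> f p * g q)) UNIV)) summable_on UNIV"
      by simp
  qed
  then have sm: "(\<lambda>(p, q). f p * g q) summable_on Sigma UNIV (\<lambda>_. UNIV)"
    by (rule abs_summable_summable)
  have "((\<lambda>(p, q). f p * g q) has_sum (a * b)) (Sigma UNIV (\<lambda>_. UNIV))"
  proof (rule has_sum_SigmaI[OF _ _ sm])
    fix p :: nat
    show "((\<lambda>q. case (p, q) of (p, q) \<Rightarrow> f p * g q) has_sum f p * b) UNIV"
      using has_sum_cmult_right[OF g(1), of "f p"] by simp
  next
    show "((\<lambda>p. f p * b) has_sum a * b) UNIV"
      using has_sum_cmult_left[OF f(1)] by simp
  qed
  then show ?thesis using U by simp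
qed

lemma neg_binom_series:
  fixes x :: real
  assumes "\<bar>x\<bar> < 1"
  shows "(\<lambda>n. real ((n + r) choose r) * x ^ n) sums (1 / (1 - x) ^ (r + 1))"
proof -
  have "(\<lambda>n. ((- (real r + 1)) gchoose n) * (-x) ^ n) sums (1 + (-x)) powr (- (real r + 1))"
    by (rule gen_binomial_real) (use assms in simp)
  moreover have "((- (real r + 1)) gchoose n) * (-x) ^ n = real ((n + r) choose r) * x ^ n" for n
  proof -
    have "((- (real r + 1)) gchoose n) = (-1) ^ n * ((real r + 1 + real n - 1) gchoose n)"
      by (rule gbinomial_minus)
    also have "real r + 1 + real n - 1 = real (r + n)" by simp
    also have "(real (r + n) gchoose n) = real ((r + n) choose n)"
      by (simp only: binomial_gbinomial[symmetric])
    also have "(r + n) choose n = (n + r) choose r"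
      using binomial_symmetric[of n "n + r"] by (simp add: add.commute)
    finally have e: "((- (real r + 1)) gchoose n) = (-1) ^ n * real ((n + r) choose r)" .
    have m: "(-1::real)^n * (-x)^n = x^n" by (simp add: power_mult_distrib[symmetric])
    have "((- (real r + 1)) gchoose n) * (-x) ^ n = real ((n + r) choose r) * ((-1)^n * (-x)^n)"
      unfolding e by (simp only: mult_ac)
    then show ?thesis unfolding m .
  qed
  moreover have "(1 + (-x)) powr (- (real r + 1)) = 1 / (1 - x) ^ (r + 1)"
  proof -
    have "- (real r + 1) = - real (r + 1)" by simp
    then have "(1 + (-x)) powr (- (real r + 1)) = (1 - x) powr (- real (r + 1))" by (simp only: diff_conv_add_uminus)
    also have "\<dots> = 1 / ((1 - x) powr (real (r + 1)))"
      by (rule powr_minus_divide)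
    also have "(1 - x) powr (real (r + 1)) = (1 - x) ^ (r + 1)"
      using assms by (intro powr_realpow) simp
    finally show ?thesis .
  qed
  ultimately show ?thesis by simp
qed

lemma neg_binom_has_sum:
  fixes x :: real
  assumes "\<bar>x\<bar> < 1"
  shows "((\<lambda>n. real ((n + r) choose r) * x ^ n) has_sum (1 / (1 - x) ^ (r + 1))) UNIV"
    and "(\<lambda>n. norm (real ((n + r) choose r) * x ^ n)) summable_on UNIV"
proof -
  have "summable (\<lambda>n. real ((n + r) choose r) * \<bar>x\<bar> ^ n)"
    using neg_binom_series[of "\<bar>x\<bar>" r] assms by (auto simp: sums_iff)
  then have ns: "summable (\<lambda>n. norm (real ((n + r) choose r) * x ^ n))"
    by (simp add: abs_mult power_abs)
  show "((\<lambda>n. real ((n + r) choose r) * x ^ n) has_sum (1 / (1 - x) ^ (r + 1))) UNIV"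
    by (rule norm_summable_imp_has_sum[OF ns neg_binom_series[OF assms]])
  show "(\<lambda>n. norm (real ((n + r) choose r) * x ^ n)) summable_on UNIV"
    using norm_summable_imp_summable_on[of "\<lambda>n. norm (real ((n + r) choose r) * x ^ n)"] ns by simp
qed

definition u :: "nat \<Rightarrow> nat \<Rightarrow> real \<Rightarrow> nat \<Rightarrow> real" where
  "u r i x t = (if i \<le> t then real ((t - i + r) choose r) * x ^ t else 0)"

lemma u_has_sum:
  fixes x :: real
  assumes "\<bar>x\<bar> < 1"
  shows "(u r i x has_sum (x ^ i * (1 / (1 - x) ^ (r + 1)))) UNIV"
    and "(\<lambda>t. norm (u r i x t)) summable_on UNIV"
proof -
  have inj: "inj_on (\<lambda>n. n + i) UNIV" by (simp add: inj_on_def)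
  have im: "range (\<lambda>n::nat. n + i) = {i..}"
  proof
    show "range (\<lambda>n::nat. n + i) \<subseteq> {i..}" by auto
    show "{i..} \<subseteq> range (\<lambda>n::nat. n + i)"
    proof
      fix t assume "t \<in> {i..}"
      then have "t = (t - i) + i" by simp
      then show "t \<in> range (\<lambda>n. n + i)" by (rule image_eqI) simp
    qed
  qed
  have c: "u r i x \<circ> (\<lambda>n. n + i) = (\<lambda>n. x ^ i * (real ((n + r) choose r) * x ^ n))"
    by (auto simp: u_def power_add mult_ac)
  have "((u r i x \<circ> (\<lambda>n. n + i)) has_sum (x ^ i * (1 / (1 - x) ^ (r + 1)))) UNIV"
    unfolding c by (rule has_sum_cmult_right[OF neg_binom_has_sum(1)[OF assms]])
  then have "(u r i x has_sum (x ^ i * (1 / (1 - x) ^ (r + 1)))) {i..}"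
    using has_sum_reindex[OF inj] im by metis
  then show "(u r i x has_sum (x ^ i * (1 / (1 - x) ^ (r + 1)))) UNIV"
    by (subst (asm) has_sum_cong_neutral[where T = UNIV and g = "u r i x"]) (auto simp: u_def)
  have "((\<lambda>t. norm (u r i x t)) \<circ> (\<lambda>n. n + i)) = (\<lambda>n. \<bar>x\<bar> ^ i * norm (real ((n + r) choose r) * x ^ n))"
    by (auto simp: u_def power_add abs_mult power_abs mult_ac)
  moreover have "(\<lambda>n. \<bar>x\<bar> ^ i * norm (real ((n + r) choose r) * x ^ n)) summable_on UNIV"
    by (rule summable_on_cmult_right[OF neg_binom_has_sum(2)[OF assms]])
  ultimately have "(\<lambda>t. norm (u r i x t)) summable_on {i..}"
    using summable_on_reindex[OF inj] im by metis
  then show "(\<lambda>t. norm (u r i x t)) summable_on UNIV"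
    by (subst (asm) summable_on_cong_neutral[where T = UNIV]) (auto simp: u_def)
qed


lemma pointwise:
  fixes x y :: real
  assumes "r \<ge> 1"
  shows "real_of_int (A t s r) * x ^ t * y ^ s =
         (\<Sum>i\<le>r. ((-1) ^ i * real (r choose i)) * (u r i x t * u r i y s))"
proof -
  define h where "h i = real ((t - i + r) choose r) * real ((s - i + r) choose r) * real (r choose i) * (-1) ^ i" for i
  have "real_of_int (A t s r) = (\<Sum>i\<in>{0..min t (min s r)}. h i)"
    unfolding closed_form[OF assms] h_def of_int_sum
    by (intro sum.cong refl) (auto simp: add.commute)
  also have "{0..min t (min s r)} = {..r} \<inter> {i. i \<le> t \<and> i \<le> s}" by auto
  also have "(\<Sum>i\<in>{..r} \<inter> {i. i \<le> t \<and> i \<le> s}. h i) = (\<Sum>i\<le>r. if i \<le> t \<and> i \<le> s then h i else 0)"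
    by (simp add: sum.inter_restrict)
  finally have "real_of_int (A t s r) * x ^ t * y ^ s = (\<Sum>i\<le>r. (if i \<le> t \<and> i \<le> s then h i else 0) * (x ^ t * y ^ s))"
    by (simp add: sum_distrib_right mult.assoc)
  also have "\<dots> = (\<Sum>i\<le>r. ((-1) ^ i * real (r choose i)) * (u r i x t * u r i y s))"
    by (intro sum.cong refl) (auto simp: u_def h_def)
  finally show ?thesis .
qed

theorem mainTheorem3:
  fixes r :: nat
  assumes "r \<ge> 1"
  shows "(\<forall>t s. A t s r =
            (\<Sum>i=0..min t (min s r).
               int ((r + t - i) choose r) * int ((r + s - i) choose r) * int (r choose i) * (-1) ^ i))
       \<and> (\<forall>x y :: real. \<bar>x\<bar> < 1 \<longrightarrow> \<bar>y\<bar> < 1 \<longrightarrow>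
            ((\<lambda>(t, s). real_of_int (A t s r) * x ^ t * y ^ s) has_sum
               ((1 - x * y) ^ r / ((1 - x) ^ (r + 1) * (1 - y) ^ (r + 1)))) UNIV)"
proof (intro conjI allI impI)
  fix t s show "A t s r =
            (\<Sum>i=0..min t (min s r).
               int ((r + t - i) choose r) * int ((r + s - i) choose r) * int (r choose i) * (-1) ^ i)"
    by (rule closed_form[OF assms])
next
  fix x y :: real
  assume x: "\<bar>x\<bar> < 1" and y: "\<bar>y\<bar> < 1"
  define Sx where "Sx = 1 / (1 - x) ^ (r + 1)"
  define Sy where "Sy = 1 / (1 - y) ^ (r + 1)"
  define c where "c i = (-1) ^ i * real (r choose i)" for i
  have fam: "((\<lambda>z. case z of (t, s) \<Rightarrow> c i * (u r i x t * u r i y s)) has_sum (c i * ((x ^ i * Sx) * (y ^ i * Sy)))) UNIV" for i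
  proof -
    have "((\<lambda>(t, s). u r i x t * u r i y s) has_sum ((x ^ i * Sx) * (y ^ i * Sy))) UNIV"
      unfolding Sx_def Sy_def
      by (rule has_sum_prod_real[OF u_has_sum(1)[OF x] u_has_sum(2)[OF x] u_has_sum(1)[OF y] u_has_sum(2)[OF y]])
    from has_sum_cmult_right[OF this, of "c i"] show ?thesis
      by (simp add: case_prod_beta)
  qed
  have "((\<lambda>z. \<Sum>i\<le>r. case z of (t, s) \<Rightarrow> c i * (u r i x t * u r i y s)) has_sum
          (\<Sum>i\<le>r. c i * ((x ^ i * Sx) * (y ^ i * Sy)))) UNIV"
    by (rule has_sum_finsum) (use fam in auto)
  moreover have "(\<lambda>z. \<Sum>i\<le>r. case z of (t, s) \<Rightarrow> c i * (u r i x t * u r i y s)) =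
        (\<lambda>(t, s). real_of_int (A t s r) * x ^ t * y ^ s)"
    by (auto simp: pointwise[OF assms] c_def)
  moreover have "(\<Sum>i\<le>r. c i * ((x ^ i * Sx) * (y ^ i * Sy))) =
         (1 - x * y) ^ r / ((1 - x) ^ (r + 1) * (1 - y) ^ (r + 1))"
  proof -
    have "(\<Sum>i\<le>r. c i * ((x ^ i * Sx) * (y ^ i * Sy))) =
          Sx * Sy * (\<Sum>i\<le>r. of_nat (r choose i) * (- (x * y)) ^ i * 1 ^ (r - i))"
      unfolding sum_distrib_left
      by (intro sum.cong refl) (simp add: c_def power_mult_distrib power_minus[of "x*y"] mult_ac)
    also have "(\<Sum>i\<le>r. of_nat (r choose i) * (- (x * y)) ^ i * 1 ^ (r - i)) = (- (x * y) + 1) ^ r"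
      by (rule binomial_ring[symmetric])
    finally show ?thesis by (simp add: Sx_def Sy_def)
  qed
  ultimately show "((\<lambda>(t, s). real_of_int (A t s r) * x ^ t * y ^ s) has_sum
               ((1 - x * y) ^ r / ((1 - x) ^ (r + 1) * (1 - y) ^ (r + 1)))) UNIV"
    by simp
qed

end
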